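(* Let $O^4$ be the set of odd-parity 4-bit strings, let $u=u_1u_2u_3u_4\in O^4$ and let $u'$ be its bitwise complement ($u\oplus u'=1111$). Let $n\ge1$ and let four parties (the first being Alice) hold $X_j=(x^j_1,\dots,x^j_n)\in\{0,1\}^n$, $j=1,\dots,4$, under the promise that $x_i^1x_i^2x_i^3x_i^4\in A$ for all $i$, where $A\subseteq O^4\setminus\{u'\}$ is any fixed set. Let $f_u(X_1,X_2,X_3,X_4)=\bigoplus_{i=1}^n t_u(x_i^1x_i^2x_i^3x_i^4)$ with $t_u(w)=1$ if $w=u$ and $0$ otherwise. Suppose the parties share $n$ copies of $|\psi_4\rangle=2^{-3/2}\big(\sum_{v\in\{0,1\}^4,\,|v|=1}|v\rangle-\sum_{v\in\{0,1\}^4,\,|v|=3}|v\rangle\big)$ (where $|v|$ is the Hamming weight), the $j$-th qubit of each copy held by party $j$. Then there is a protocol in which, for each $i$, party $j$ applies the Hadamard gate $H$ to its qubit of the $i$-th copy if $x_i^j\ne u_j$ and the identity otherwise, measures in the computational basis, performs local classical computation, and parties $2,3,4$ each send one classical bit to Alice (three classical bits in total), after which Alice outputs $f_u(X_1,X_2,X_3,X_4)$ correctly for every input satisfying the promise.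
   Context: $H$ is the Hadamard gate $H|0\rangle=(|0\rangle+|1\rangle)/\sqrt2$, $H|1\rangle=(|0\rangle-|1\rangle)/\sqrt2$. Communication consists only of classical bits sent to Alice; no quantum communication is allowed. *)

theory Defs
  imports Complex_Main
begin

text \<open>Bits are booleans (True = 1); bit strings are bool lists.
  Parties are indexed 0,1,2,3 (party 0 is Alice); copies/positions by 0..n-1.\<close>

definition bitstrings :: "nat \<Rightarrow> bool list set" where
  "bitstrings k = {v. length v = k}"

definition hw :: "bool list \<Rightarrow> nat" where
  "hw v = length (filter id v)"

definition O4 :: "bool list set" where
  "O4 = {v \<in> bitstrings 4. odd (hw v)}"

definition bcompl :: "bool list \<Rightarrow> bool list" where
  "bcompl v = map Not v"

definition t_fun :: "bool list \<Rightarrow> bool list \<Rightarrow> bool" where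
  "t_fun u w = (w = u)"

definition word_at :: "(nat \<Rightarrow> bool list) \<Rightarrow> nat \<Rightarrow> bool list" where
  "word_at X i = map (\<lambda>j. X j ! i) [0..<4]"

definition f_u :: "bool list \<Rightarrow> nat \<Rightarrow> (nat \<Rightarrow> bool list) \<Rightarrow> bool" where
  "f_u u n X = odd (card {i. i < n \<and> t_fun u (word_at X i)})"

definition psi4 :: "bool list \<Rightarrow> real" where
  "psi4 v = 2 powr (-3/2) *
     (if length v = 4 \<and> hw v = 1 then 1 else if length v = 4 \<and> hw v = 3 then -1 else 0)"

text \<open>Matrix entries <b|H|v> of the Hadamard gate and <b|G|v> for G = H (s) or identity (not s).\<close>
definition hadamard :: "bool \<Rightarrow> bool \<Rightarrow> real" where
  "hadamard b v = (if b \<and> v then -1 else 1) / sqrt 2"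

definition gate :: "bool \<Rightarrow> bool \<Rightarrow> bool \<Rightarrow> real" where
  "gate s b v = (if s then hadamard b v else (if b = v then 1 else 0))"

text \<open>Amplitude <b| (G_{s_1} x G_{s_2} x G_{s_3} x G_{s_4}) |psi_4> and the Born probability
  of measuring outcome b on one copy.\<close>
definition copy_amp :: "bool list \<Rightarrow> bool list \<Rightarrow> real" where
  "copy_amp s b = (\<Sum>v\<in>bitstrings 4. (\<Prod>j<4. gate (s ! j) (b ! j) (v ! j)) * psi4 v)"

definition copy_prob :: "bool list \<Rightarrow> bool list \<Rightarrow> real" where
  "copy_prob s b = (copy_amp s b)\<^sup>2"

definition hsel :: "bool list \<Rightarrow> (nat \<Rightarrow> bool list) \<Rightarrow> nat \<Rightarrow> bool list" where
  "hsel u X i = map (\<lambda>j. X j ! i \<noteq> u ! j) [0..<4]"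

text \<open>Probability that the joint measurement outcomes are B (B j = outcomes of party j,
  one bit per copy) on the product state psi_4^{(x) n}.\<close>
definition outcome_prob :: "bool list \<Rightarrow> nat \<Rightarrow> (nat \<Rightarrow> bool list) \<Rightarrow> (nat \<Rightarrow> bool list) \<Rightarrow> real" where
  "outcome_prob u n X B = (\<Prod>i<n. copy_prob (hsel u X i) (word_at B i))"

end

theory Submission imports Defs begin

lemma bs0: "bitstrings 0 = {[]}" by (auto simp: bitstrings_def)

lemma bsSuc: "bitstrings (Suc k) = Cons False ` bitstrings k \<union> Cons True ` bitstrings k"
  unfolding bitstrings_def
  apply (rule set_eqI)
  subgoal for v by (cases v) auto
  done

lemma fin_bs: "finite (bitstrings k)"
  unfolding bitstrings_def using finite_lists_length_eq[of "UNIV::bool set" k] by simp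

lemma sum_bsSuc: "(\<Sum>v\<in>bitstrings (Suc k). g v) = (\<Sum>v\<in>bitstrings k. g (False#v)) + (\<Sum>v\<in>bitstrings k. g (True#v))"
  unfolding bsSuc
  by (subst sum.union_disjoint) (auto simp: fin_bs sum.reindex)

lemma b4: "bitstrings 4 = bitstrings (Suc (Suc (Suc (Suc 0))))" by (simp add: numeral_eq_Suc)

lemma amp_sum: "copy_amp s b = (\<Sum>v\<in>bitstrings (Suc (Suc (Suc (Suc 0)))). (\<Prod>j<4. gate (s ! j) (b ! j) (v ! j)) * psi4 v)"
  unfolding copy_amp_def b4 ..

lemma key: "copy_amp [s0,s1,s2,s3] [b0,b1,b2,b3] \<noteq> 0 \<Longrightarrow> even (hw [s0,s1,s2,s3]) \<Longrightarrow>
   \<not> (s0 \<and> s1 \<and> s2 \<and> s3) \<Longrightarrow> odd (hw [b0,b1,b2,b3]) = (\<not>s0 \<and> \<not>s1 \<and> \<not>s2 \<and> \<not>s3)"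
  unfolding amp_sum sum_bsSuc bs0
  apply (simp add: lessThan_nat_numeral psi4_def gate_def hw_def)
  apply (cases s0; cases s1; cases s2; cases s3; cases b0; cases b1; cases b2; cases b3; simp add: hadamard_def)
  done

lemma len4: "length v = 4 \<Longrightarrow> \<exists>a b c d. v = [a,b,c,d]"
  by (cases v; cases "tl v"; cases "tl (tl v)"; cases "tl (tl (tl v))"; cases "tl (tl (tl (tl v)))"; simp)

lemma copy_lemma:
  assumes "u \<in> O4" "w \<in> O4" "w \<noteq> bcompl u" "length b = 4"
    "copy_amp (map (\<lambda>j. w ! j \<noteq> u ! j) [0..<4]) b \<noteq> 0"
  shows "odd (hw b) = (w = u)"
proof -
  obtain u0 u1 u2 u3 where u: "u = [u0,u1,u2,u3]" using len4 assms(1) unfolding O4_def bitstrings_def by blast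
  obtain w0 w1 w2 w3 where w: "w = [w0,w1,w2,w3]" using len4 assms(2) unfolding O4_def bitstrings_def by blast
  obtain b0 b1 b2 b3 where b: "b = [b0,b1,b2,b3]" using len4 assms(4) by blast
  have m: "map (\<lambda>j. w ! j \<noteq> u ! j) [0..<4] = [w0\<noteq>u0, w1\<noteq>u1, w2\<noteq>u2, w3\<noteq>u3]"
    by (simp add: u w upt_rec)
  have ou: "odd (hw [u0,u1,u2,u3])" and ow: "odd (hw [w0,w1,w2,w3])"
    using assms(1,2) u w by (auto simp: O4_def)
  have ev: "even (hw [w0\<noteq>u0, w1\<noteq>u1, w2\<noteq>u2, w3\<noteq>u3])"
    using ou ow by (cases u0; cases u1; cases u2; cases u3; cases w0; cases w1; cases w2; cases w3; simp add: hw_def)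
  have na: "\<not> ((w0\<noteq>u0) \<and> (w1\<noteq>u1) \<and> (w2\<noteq>u2) \<and> (w3\<noteq>u3))"
    using assms(3) u w by (auto simp: bcompl_def)
  have "odd (hw b) = (\<not>(w0\<noteq>u0) \<and> \<not>(w1\<noteq>u1) \<and> \<not>(w2\<noteq>u2) \<and> \<not>(w3\<noteq>u3))"
    using key[OF _ ev na] assms(5) unfolding m b by blast
  then show ?thesis using u w by auto
qed

lemma hw_sum: "hw v = (\<Sum>i<length v. of_bool (v ! i))"
proof (induction v)
  case Nil then show ?case by (simp add: hw_def)
next
  case (Cons a v)
  have "(\<Sum>i<length (a#v). of_bool ((a#v) ! i) :: nat) = of_bool a + (\<Sum>i<length v. of_bool (v ! i))"
    by (simp only: length_Cons sum.lessThan_Suc_shift nth_Cons_0 nth_Cons_Suc)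
  moreover have "hw (a#v) = of_bool a + hw v" by (simp add: hw_def)
  ultimately show ?case using Cons by simp
qed

lemma par_card: "(\<And>i. i < (n::nat) \<Longrightarrow> odd (f i) = P i) \<Longrightarrow> odd (\<Sum>i<n. (f i :: nat)) = odd (card {i. i < n \<and> P i})"
proof (induction n)
  case 0 then show ?case by simp
next
  case (Suc n)
  have s: "{i. i < Suc n \<and> P i} = (if P n then insert n {i. i < n \<and> P i} else {i. i < n \<and> P i})"
    by (auto simp: less_Suc_eq)
  have IH: "odd (\<Sum>i<n. f i) = odd (card {i. i < n \<and> P i})" using Suc by simp
  have "odd (f n) = P n" using Suc by simp
  then show ?case using IH by (simp add: s)
qed

theorem theorem4:
  fixes u :: "bool list" and A :: "bool list set" and n :: nat
  assumes "u \<in> O4"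
    and "A \<subseteq> O4 - {bcompl u}"
    and "n \<ge> 1"
  shows "\<exists>(msg :: nat \<Rightarrow> bool list \<Rightarrow> bool list \<Rightarrow> bool)
            (alice :: bool list \<Rightarrow> bool list \<Rightarrow> bool \<Rightarrow> bool \<Rightarrow> bool \<Rightarrow> bool).
          \<forall>X B. (\<forall>j<4. length (X j) = n) \<longrightarrow> (\<forall>j<4. length (B j) = n) \<longrightarrow>
            (\<forall>i<n. word_at X i \<in> A) \<longrightarrow> outcome_prob u n X B > 0 \<longrightarrow>
            alice (X 0) (B 0) (msg 1 (X 1) (B 1)) (msg 2 (X 2) (B 2)) (msg 3 (X 3) (B 3))
              = f_u u n X"
proof (intro exI allI impI)
  fix X B
  assume lX: "\<forall>j<4. length (X j) = n" and lB: "\<forall>j<4. length (B j) = n"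
    and pr: "\<forall>i<n. word_at X i \<in> A" and pos: "outcome_prob u n X B > 0"
  have amp: "copy_amp (hsel u X i) (word_at B i) \<noteq> 0" if "i < n" for i
  proof
    assume "copy_amp (hsel u X i) (word_at B i) = 0"
    then have "outcome_prob u n X B = 0"
      unfolding outcome_prob_def copy_prob_def using that by (auto intro!: prod_zero)
    then show False using pos by simp
  qed
  have each: "odd (hw (word_at B i)) = (word_at X i = u)" if "i < n" for i
  proof (rule copy_lemma[OF assms(1)])
    show "word_at X i \<in> O4" "word_at X i \<noteq> bcompl u" using pr assms(2) that by auto
    show "length (word_at B i) = 4" by (simp add: word_at_def)
    have "map (\<lambda>j. word_at X i ! j \<noteq> u ! j) [0..<4] = hsel u X i"
      by (simp add: hsel_def word_at_def)
    then show "copy_amp (map (\<lambda>j. word_at X i ! j \<noteq> u ! j) [0..<4]) (word_at B i) \<noteq> 0"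
      using amp that by simp
  qed
  have hwB: "hw (B j) = (\<Sum>i<n. of_bool (B j ! i))" if "j < 4" for j
    using lB that by (simp add: hw_sum)
  have hwW: "hw (word_at B i) = (\<Sum>j<4. of_bool (B j ! i))" for i
    by (simp add: hw_sum word_at_def)
  have "hw (B 0) + hw (B 1) + hw (B 2) + hw (B 3) = (\<Sum>j<4. hw (B j))"
    by (simp add: lessThan_nat_numeral)
  also have "\<dots> = (\<Sum>j<4. \<Sum>i<n. of_bool (B j ! i))" using hwB by simp
  also have "\<dots> = (\<Sum>i<n. \<Sum>j<4. of_bool (B j ! i))" by (rule sum.swap)
  also have "\<dots> = (\<Sum>i<n. hw (word_at B i))" using hwW by simp
  finally have tot: "hw (B 0) + hw (B 1) + hw (B 2) + hw (B 3) = (\<Sum>i<n. hw (word_at B i))" .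
  have "odd (\<Sum>i<n. hw (word_at B i)) = f_u u n X"
    unfolding f_u_def t_fun_def by (rule par_card) (use each in auto)
  then show "(\<lambda>x b m1 m2 m3. odd (hw b) \<noteq> (m1 \<noteq> (m2 \<noteq> m3))) (X 0) (B 0)
     ((\<lambda>j x b. odd (hw b)) 1 (X 1) (B 1)) ((\<lambda>j x b. odd (hw b)) 2 (X 2) (B 2))
     ((\<lambda>j x b. odd (hw b)) 3 (X 3) (B 3)) = f_u u n X"
    using tot[symmetric] by auto
qed

end
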